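(* In the two-period difference-in-differences setting with anticipation described in the context, suppose: (i) $\{Y_{i0}(0,1),Y_{i0}(1,1),Y_{i0}(0),Y_{i1}(0),Y_{i1}(1),D_i,A_i\}_{i=1}^n$ are i.i.d. across $i$; (ii) $Y_{i0}(0)=Y_{i0}(0,1)$; (iii) $\mathbb{E}[g(Y_{i1}(0))-g(Y_{i0}(0))\mid D_i=1]=\mathbb{E}[g(Y_{i1}(0))-g(Y_{i0}(0))\mid D_i=0]$; (iv) $\mathbb{E}[g(Y_{i0}(0,0))\mid D_i=1,A_i=0]=\mathbb{E}[g(Y_{i0}(0,0))\mid D_i=1,A_i=1]$; (v) $g(Y_{i0})\in[a,b]$. Then $\mu_g$ is partially identified in the closed interval $[\mu_{g,l},\mu_{g,u}]$, where \[\mu_{g,l}=\mathbb{E}\left[\frac{D_i-\mathbb{P}[D_i=1]}{\mathbb{P}[D_i=1](1-\mathbb{P}[D_i=1])}g(Y_{i1})+\frac{1-D_i}{1-\mathbb{P}[D_i=1]}g(Y_{i0})-b\right],\] \[\mu_{g,u}=\mathbb{E}\left[\frac{D_i-\mathbb{P}[D_i=1]}{\mathbb{P}[D_i=1](1-\mathbb{P}[D_i=1])}g(Y_{i1})+\frac{1-D_i}{1-\mathbb{P}[D_i=1]}g(Y_{i0})-a\right].\]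
   Context: Two periods $t\in\{0,1\}$, units $i=1,\dots,n$, observed binary treatment $D_i$ (applied in period 1) with $0<\mathbb{P}[D_i=1]<1$, unobserved binary anticipation status $A_i$ in period 0. Potential outcomes $Y_{i1}(d)$, $d\in\{0,1\}$; $Y_{i0}(0)$ (also written $Y_{i0}(0,0)$) the period-0 outcome without anticipation or treatment; $Y_{i0}(a,1)$ the period-0 outcome of a unit to be treated with anticipation status $a$. Observed: $Y_{i1}=D_iY_{i1}(1)+(1-D_i)Y_{i1}(0)$, $Y_{i0}=(1-D_i)Y_{i0}(0)+D_i[(1-A_i)Y_{i0}(0,1)+A_iY_{i0}(1,1)]$. $g$ is a known measurable real function with finite expectations; $a\le b$ are real constants. $\mu_g=\mathbb{E}[g(Y_{i1}(1))-g(Y_{i1}(0))\mid D_i=1]$. *)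

theory Defs
  imports "HOL-Probability.Probability"
begin

definition cond_mean :: "'s measure \<Rightarrow> ('s \<Rightarrow> real) \<Rightarrow> 's set \<Rightarrow> real" where
  "cond_mean M X B = (\<integral>\<omega>. indicator B \<omega> * X \<omega> \<partial>M) / measure M B"

definition obs_Y1 :: "('s \<Rightarrow> real) \<Rightarrow> ('s \<Rightarrow> real) \<Rightarrow> ('s \<Rightarrow> real) \<Rightarrow> 's \<Rightarrow> real" where
  "obs_Y1 D Y1_1 Y1_0 \<omega> = D \<omega> * Y1_1 \<omega> + (1 - D \<omega>) * Y1_0 \<omega>"

definition obs_Y0 :: "('s \<Rightarrow> real) \<Rightarrow> ('s \<Rightarrow> real) \<Rightarrow> ('s \<Rightarrow> real) \<Rightarrow> ('s \<Rightarrow> real)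
    \<Rightarrow> ('s \<Rightarrow> real) \<Rightarrow> 's \<Rightarrow> real" where
  "obs_Y0 D A Y0_0 Y0_01 Y0_11 \<omega> =
     (1 - D \<omega>) * Y0_0 \<omega> + D \<omega> * ((1 - A \<omega>) * Y0_01 \<omega> + A \<omega> * Y0_11 \<omega>)"

end

theory Submission
  imports Defs
begin

lemma main:
  fixes M :: "'s measure" and Ya Yb Yc Yd Ye D A :: "'s \<Rightarrow> real"
    and g :: "real \<Rightarrow> real" and a b :: real
  assumes P: "prob_space M"
    and meas: "D \<in> borel_measurable M" "A \<in> borel_measurable M"
    and binary: "\<And>\<omega>. \<omega> \<in> space M \<Longrightarrow> D \<omega> \<in> {0, 1} \<and> A \<omega> \<in> {0, 1}"
    and integ: "integrable M (\<lambda>\<omega>. g (Yc \<omega>))" "integrable M (\<lambda>\<omega>. g (Yd \<omega>))"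
          "integrable M (\<lambda>\<omega>. g (Ye \<omega>))"
    and pD: "0 < measure M {\<omega> \<in> space M. D \<omega> = 1}" "measure M {\<omega> \<in> space M. D \<omega> = 1} < 1"
    and pA: "0 < measure M {\<omega> \<in> space M. D \<omega> = 1 \<and> A \<omega> = 0}"
          "0 < measure M {\<omega> \<in> space M. D \<omega> = 1 \<and> A \<omega> = 1}"
    and na: "\<And>\<omega>. \<omega> \<in> space M \<Longrightarrow> Yc \<omega> = Ya \<omega>"
    and pt: "cond_mean M (\<lambda>\<omega>. g (Yd \<omega>) - g (Yc \<omega>)) {\<omega> \<in> space M. D \<omega> = 1}
        = cond_mean M (\<lambda>\<omega>. g (Yd \<omega>) - g (Yc \<omega>)) {\<omega> \<in> space M. D \<omega> = 0}"
    and ai: "cond_mean M (\<lambda>\<omega>. g (Yc \<omega>)) {\<omega> \<in> space M. D \<omega> = 1 \<and> A \<omega> = 0}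
        = cond_mean M (\<lambda>\<omega>. g (Yc \<omega>)) {\<omega> \<in> space M. D \<omega> = 1 \<and> A \<omega> = 1}"
    and bounded: "\<And>\<omega>. \<omega> \<in> space M \<Longrightarrow> g (obs_Y0 D A Yc Ya Yb \<omega>) \<in> {a..b}"
  defines "p \<equiv> measure M {\<omega> \<in> space M. D \<omega> = 1}"
  shows "(\<integral>\<omega>. (D \<omega> - p) / (p * (1 - p)) * g (obs_Y1 D Ye Yd \<omega>)
                     + (1 - D \<omega>) / (1 - p) * g (obs_Y0 D A Yc Ya Yb \<omega>) - c \<partial>M)
        = cond_mean M (\<lambda>\<omega>. g (Ye \<omega>) - g (Yd \<omega>)) {\<omega> \<in> space M. D \<omega> = 1}
          + cond_mean M (\<lambda>\<omega>. g (Yc \<omega>)) {\<omega> \<in> space M. D \<omega> = 1} - c"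
    and "a \<le> cond_mean M (\<lambda>\<omega>. g (Yc \<omega>)) {\<omega> \<in> space M. D \<omega> = 1}"
    and "cond_mean M (\<lambda>\<omega>. g (Yc \<omega>)) {\<omega> \<in> space M. D \<omega> = 1} \<le> b"
proof -
  interpret prob_space M by (rule P)
  define I1 where "I1 = {\<omega> \<in> space M. D \<omega> = 1}"
  define I0 where "I0 = {\<omega> \<in> space M. D \<omega> = 0}"
  define J0 where "J0 = {\<omega> \<in> space M. D \<omega> = 1 \<and> A \<omega> = 0}"
  define J1 where "J1 = {\<omega> \<in> space M. D \<omega> = 1 \<and> A \<omega> = 1}"
  have s: "I1 \<in> sets M" "I0 \<in> sets M" "J0 \<in> sets M" "J1 \<in> sets M"
    unfolding I1_def I0_def J0_def J1_def using meas by measurable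
  have I0c: "I0 = space M - I1" using binary unfolding I0_def I1_def by auto
  have mI0: "measure M I0 = 1 - p" unfolding I0c p_def I1_def[symmetric] using s by (simp add: prob_compl)
  have p0: "0 < p" "p < 1" using pD unfolding p_def by auto
  define f11 where "f11 = (\<lambda>\<omega>. g (Ye \<omega>))"
  define f10 where "f10 = (\<lambda>\<omega>. g (Yd \<omega>))"
  define f00 where "f00 = (\<lambda>\<omega>. g (Yc \<omega>))"
  have int: "integrable M f11" "integrable M f10" "integrable M f00"
    using integ unfolding f11_def f10_def f00_def by auto
  have ii: "integrable M (\<lambda>\<omega>. indicator S \<omega> * f \<omega>)" if "S \<in> sets M" "integrable M f" for S and f :: "'s \<Rightarrow> real"
    using integrable_real_mult_indicator[OF that] by (simp add: mult.commute)
  define E11 where "E11 = (\<integral>\<omega>. indicator I1 \<omega> * f11 \<omega> \<partial>M)"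
  define E10 where "E10 = (\<integral>\<omega>. indicator I1 \<omega> * f10 \<omega> \<partial>M)"
  define E00 where "E00 = (\<integral>\<omega>. indicator I1 \<omega> * f00 \<omega> \<partial>M)"
  define F10 where "F10 = (\<integral>\<omega>. indicator I0 \<omega> * f10 \<omega> \<partial>M)"
  define F00 where "F00 = (\<integral>\<omega>. indicator I0 \<omega> * f00 \<omega> \<partial>M)"
  define G0 where "G0 = (\<integral>\<omega>. indicator J0 \<omega> * f00 \<omega> \<partial>M)"
  define G1 where "G1 = (\<integral>\<omega>. indicator J1 \<omega> * f00 \<omega> \<partial>M)"
  have dI: "(\<integral>\<omega>. indicator S \<omega> * (f \<omega> - h \<omega>) \<partial>M) = (\<integral>\<omega>. indicator S \<omega> * f \<omega> \<partial>M) - (\<integral>\<omega>. indicator S \<omega> * h \<omega> \<partial>M)"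
    if "S \<in> sets M" "integrable M f" "integrable M h" for S and f h :: "'s \<Rightarrow> real"
    using Bochner_Integration.integral_diff[OF ii[OF that(1,2)] ii[OF that(1,3)]]
    by (simp add: right_diff_distrib)
  have pI1: "measure M I1 = p" unfolding p_def I1_def ..
  have e1: "(\<integral>\<omega>. indicator I1 \<omega> * (g (Yd \<omega>) - g (Yc \<omega>)) \<partial>M) = E10 - E00"
    using dI[OF s(1) int(2) int(3)] unfolding E10_def E00_def f10_def f00_def by simp
  have e0: "(\<integral>\<omega>. indicator I0 \<omega> * (g (Yd \<omega>) - g (Yc \<omega>)) \<partial>M) = F10 - F00"
    using dI[OF s(2) int(2) int(3)] unfolding F10_def F00_def f10_def f00_def by simp
  have ptE: "(E10 - E00) / p = (F10 - F00) / (1 - p)"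
    using pt unfolding cond_mean_def I1_def[symmetric] I0_def[symmetric] mI0 pI1 e1 e0 .
  define q0 where "q0 = measure M J0"
  define q1 where "q1 = measure M J1"
  have q: "0 < q0" "0 < q1" using pA unfolding q0_def q1_def J0_def J1_def by auto
  have qp: "q0 + q1 = p"
  proof -
    have "I1 = J0 \<union> J1" "J0 \<inter> J1 = {}" using binary unfolding I1_def J0_def J1_def by auto
    then show ?thesis unfolding q0_def q1_def pI1[symmetric] using s by (simp add: finite_measure_Union)
  qed
  have aiE: "G0 / q0 = G1 / q1"
    using ai unfolding cond_mean_def J0_def[symmetric] J1_def[symmetric] G0_def G1_def f00_def q0_def q1_def .
  have EG: "E00 = G0 + G1"
  proof -
    have "E00 = (\<integral>\<omega>. indicator J0 \<omega> * f00 \<omega> + indicator J1 \<omega> * f00 \<omega> \<partial>M)"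
      unfolding E00_def
      by (rule Bochner_Integration.integral_cong) (use binary in \<open>auto simp: I1_def J0_def J1_def indicator_def\<close>)
    also have "\<dots> = G0 + G1" unfolding G0_def G1_def
      by (rule Bochner_Integration.integral_add) (intro ii s int)+
    finally show ?thesis .
  qed
  have Gb: "a * q0 \<le> G0 \<and> G0 \<le> b * q0"
  proof -
    have fb: "f00 \<omega> \<in> {a..b}" if "\<omega> \<in> J0" for \<omega>
      using bounded[of \<omega>] na[of \<omega>] that unfolding J0_def f00_def obs_Y0_def by auto
    have "(\<integral>\<omega>. indicator J0 \<omega> * a \<partial>M) \<le> G0" unfolding G0_def
      by (rule integral_mono[OF ii[OF s(3) integrable_const] ii[OF s(3) int(3)]]) (use fb in \<open>auto simp: indicator_def\<close>)
    moreover have "G0 \<le> (\<integral>\<omega>. indicator J0 \<omega> * b \<partial>M)" unfolding G0_def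
      by (rule integral_mono[OF ii[OF s(3) int(3)] ii[OF s(3) integrable_const]]) (use fb in \<open>auto simp: indicator_def\<close>)
    ultimately show ?thesis using s unfolding q0_def by (simp add: mult.commute)
  qed
  define cc where "cc = G0 / q0"
  have E00c: "E00 = cc * p"
  proof -
    have "G0 * q1 = G1 * q0" using aiE q by (simp add: field_simps)
    then show ?thesis using EG q qp[symmetric] unfolding cc_def by (simp add: field_simps distrib_left)
  qed
  have cm00: "cond_mean M (\<lambda>\<omega>. g (Yc \<omega>)) {\<omega> \<in> space M. D \<omega> = 1} = cc"
    unfolding cond_mean_def I1_def[symmetric] pI1 using E00c p0
    by (simp add: E00_def f00_def)
  have ccab: "a \<le> cc" "cc \<le> b" using Gb q unfolding cc_def by (auto simp: field_simps)
  show "a \<le> cond_mean M (\<lambda>\<omega>. g (Yc \<omega>)) {\<omega> \<in> space M. D \<omega> = 1}"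
    "cond_mean M (\<lambda>\<omega>. g (Yc \<omega>)) {\<omega> \<in> space M. D \<omega> = 1} \<le> b"
    using cm00 ccab by auto
  have cmg: "cond_mean M (\<lambda>\<omega>. g (Ye \<omega>) - g (Yd \<omega>)) {\<omega> \<in> space M. D \<omega> = 1} = (E11 - E10) / p"
    unfolding cond_mean_def I1_def[symmetric] pI1
    using dI[OF s(1) int(1) int(2)] unfolding E11_def E10_def f11_def f10_def by simp
  have "(\<integral>\<omega>. (D \<omega> - p) / (p * (1 - p)) * g (obs_Y1 D Ye Yd \<omega>)
                     + (1 - D \<omega>) / (1 - p) * g (obs_Y0 D A Yc Ya Yb \<omega>) - c \<partial>M)
     = (\<integral>\<omega>. indicator I1 \<omega> * f11 \<omega> / p - indicator I0 \<omega> * f10 \<omega> / (1 - p)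
          + indicator I0 \<omega> * f00 \<omega> / (1 - p) - c \<partial>M)"
  proof (rule Bochner_Integration.integral_cong)
    fix \<omega> assume w: "\<omega> \<in> space M"
    show "(D \<omega> - p) / (p * (1 - p)) * g (obs_Y1 D Ye Yd \<omega>)
                     + (1 - D \<omega>) / (1 - p) * g (obs_Y0 D A Yc Ya Yb \<omega>) - c =
          indicator I1 \<omega> * f11 \<omega> / p - indicator I0 \<omega> * f10 \<omega> / (1 - p)
          + indicator I0 \<omega> * f00 \<omega> / (1 - p) - c"
      using binary[OF w] w p0
      by (auto simp: I1_def I0_def f11_def f10_def f00_def obs_Y1_def obs_Y0_def field_simps)
  qed simp
  also have "\<dots> = E11 / p - F10 / (1 - p) + F00 / (1 - p) - c"
    unfolding E11_def F10_def F00_def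
    by (simp add: ii s int Bochner_Integration.integral_diff Bochner_Integration.integral_add prob_space)
  also have "\<dots> = (E11 - E10) / p + cc - c"
  proof -
    have "F10 / (1 - p) - F00 / (1 - p) = (F10 - F00) / (1 - p)" by (simp add: diff_divide_distrib)
    also have "\<dots> = E10 / p - cc" using ptE p0 E00c by (simp add: diff_divide_distrib)
    finally have "F10 / (1 - p) - F00 / (1 - p) = E10 / p - cc" .
    then show ?thesis by (simp add: diff_divide_distrib)
  qed
  finally show "(\<integral>\<omega>. (D \<omega> - p) / (p * (1 - p)) * g (obs_Y1 D Ye Yd \<omega>)
                     + (1 - D \<omega>) / (1 - p) * g (obs_Y0 D A Yc Ya Yb \<omega>) - c \<partial>M)
        = cond_mean M (\<lambda>\<omega>. g (Ye \<omega>) - g (Yd \<omega>)) {\<omega> \<in> space M. D \<omega> = 1}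
          + cond_mean M (\<lambda>\<omega>. g (Yc \<omega>)) {\<omega> \<in> space M. D \<omega> = 1} - c"
    using cmg cm00 by simp
qed

theorem theoremA3:
  fixes M :: "'s measure" and n :: nat
    and Y0_01 Y0_11 Y0_0 Y1_0 Y1_1 D A :: "nat \<Rightarrow> 's \<Rightarrow> real"
    and g :: "real \<Rightarrow> real" and a b :: real
  assumes P: "prob_space M"
    and g_meas: "g \<in> borel_measurable borel"
    and ab: "a \<le> b"
    and meas: "\<And>i. i \<in> {1..n} \<Longrightarrow>
          Y0_01 i \<in> borel_measurable M \<and> Y0_11 i \<in> borel_measurable M \<and>
          Y0_0 i \<in> borel_measurable M \<and> Y1_0 i \<in> borel_measurable M \<and>
          Y1_1 i \<in> borel_measurable M \<and> D i \<in> borel_measurable M \<and> A i \<in> borel_measurable M"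
    and binary: "\<And>i \<omega>. i \<in> {1..n} \<Longrightarrow> \<omega> \<in> space M \<Longrightarrow> D i \<omega> \<in> {0, 1} \<and> A i \<omega> \<in> {0, 1}"
    and integ: "\<And>i. i \<in> {1..n} \<Longrightarrow>
          integrable M (\<lambda>\<omega>. g (Y0_01 i \<omega>)) \<and> integrable M (\<lambda>\<omega>. g (Y0_11 i \<omega>)) \<and>
          integrable M (\<lambda>\<omega>. g (Y0_0 i \<omega>)) \<and> integrable M (\<lambda>\<omega>. g (Y1_0 i \<omega>)) \<and>
          integrable M (\<lambda>\<omega>. g (Y1_1 i \<omega>))"
    and pD: "\<And>i. i \<in> {1..n} \<Longrightarrow>
          0 < measure M {\<omega> \<in> space M. D i \<omega> = 1} \<and> measure M {\<omega> \<in> space M. D i \<omega> = 1} < 1"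
    and pA: "\<And>i. i \<in> {1..n} \<Longrightarrow>
          0 < measure M {\<omega> \<in> space M. D i \<omega> = 1 \<and> A i \<omega> = 0} \<and>
          0 < measure M {\<omega> \<in> space M. D i \<omega> = 1 \<and> A i \<omega> = 1}"
    and iid_indep: "prob_space.indep_vars M (\<lambda>_. borel)
          (\<lambda>i \<omega>. (Y0_01 i \<omega>, Y0_11 i \<omega>, Y0_0 i \<omega>, Y1_0 i \<omega>, Y1_1 i \<omega>, D i \<omega>, A i \<omega>)) {1..n}"
    and iid_ident: "\<And>i. i \<in> {1..n} \<Longrightarrow>
          distr M borel (\<lambda>\<omega>. (Y0_01 i \<omega>, Y0_11 i \<omega>, Y0_0 i \<omega>, Y1_0 i \<omega>, Y1_1 i \<omega>, D i \<omega>, A i \<omega>))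
        = distr M borel (\<lambda>\<omega>. (Y0_01 1 \<omega>, Y0_11 1 \<omega>, Y0_0 1 \<omega>, Y1_0 1 \<omega>, Y1_1 1 \<omega>, D 1 \<omega>, A 1 \<omega>))"
    and no_anticip_untreated: "\<And>i \<omega>. i \<in> {1..n} \<Longrightarrow> \<omega> \<in> space M \<Longrightarrow> Y0_0 i \<omega> = Y0_01 i \<omega>"
    and parallel_trends: "\<And>i. i \<in> {1..n} \<Longrightarrow>
          cond_mean M (\<lambda>\<omega>. g (Y1_0 i \<omega>) - g (Y0_0 i \<omega>)) {\<omega> \<in> space M. D i \<omega> = 1}
        = cond_mean M (\<lambda>\<omega>. g (Y1_0 i \<omega>) - g (Y0_0 i \<omega>)) {\<omega> \<in> space M. D i \<omega> = 0}"
    and anticip_indep: "\<And>i. i \<in> {1..n} \<Longrightarrow>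
          cond_mean M (\<lambda>\<omega>. g (Y0_0 i \<omega>)) {\<omega> \<in> space M. D i \<omega> = 1 \<and> A i \<omega> = 0}
        = cond_mean M (\<lambda>\<omega>. g (Y0_0 i \<omega>)) {\<omega> \<in> space M. D i \<omega> = 1 \<and> A i \<omega> = 1}"
    and bounded: "\<And>i \<omega>. i \<in> {1..n} \<Longrightarrow> \<omega> \<in> space M \<Longrightarrow>
          g (obs_Y0 (D i) (A i) (Y0_0 i) (Y0_01 i) (Y0_11 i) \<omega>) \<in> {a..b}"
  shows "\<forall>i \<in> {1..n}.
    (let p = measure M {\<omega> \<in> space M. D i \<omega> = 1};
         Y1 = obs_Y1 (D i) (Y1_1 i) (Y1_0 i);
         Y0 = obs_Y0 (D i) (A i) (Y0_0 i) (Y0_01 i) (Y0_11 i);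
         mu_g = cond_mean M (\<lambda>\<omega>. g (Y1_1 i \<omega>) - g (Y1_0 i \<omega>)) {\<omega> \<in> space M. D i \<omega> = 1};
         mu_l = (\<integral>\<omega>. (D i \<omega> - p) / (p * (1 - p)) * g (Y1 \<omega>)
                     + (1 - D i \<omega>) / (1 - p) * g (Y0 \<omega>) - b \<partial>M);
         mu_u = (\<integral>\<omega>. (D i \<omega> - p) / (p * (1 - p)) * g (Y1 \<omega>)
                     + (1 - D i \<omega>) / (1 - p) * g (Y0 \<omega>) - a \<partial>M)
     in mu_l \<le> mu_g \<and> mu_g \<le> mu_u)"
proof
  fix i assume i: "i \<in> {1..n}"
  have mm: "D i \<in> borel_measurable M" "A i \<in> borel_measurable M" using meas[OF i] by auto
  have ig: "integrable M (\<lambda>\<omega>. g (Y0_0 i \<omega>))" "integrable M (\<lambda>\<omega>. g (Y1_0 i \<omega>))"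
      "integrable M (\<lambda>\<omega>. g (Y1_1 i \<omega>))" using integ[OF i] by auto
  note h = main[OF P mm binary[OF i] ig conjunct1[OF pD[OF i]] conjunct2[OF pD[OF i]]
      conjunct1[OF pA[OF i]] conjunct2[OF pA[OF i]] no_anticip_untreated[OF i]
      parallel_trends[OF i] anticip_indep[OF i] bounded[OF i]]
  note hb = h(1)[where c=b]
  note ha = h(1)[where c=a]
  show "let p = measure M {\<omega> \<in> space M. D i \<omega> = 1};
         Y1 = obs_Y1 (D i) (Y1_1 i) (Y1_0 i);
         Y0 = obs_Y0 (D i) (A i) (Y0_0 i) (Y0_01 i) (Y0_11 i);
         mu_g = cond_mean M (\<lambda>\<omega>. g (Y1_1 i \<omega>) - g (Y1_0 i \<omega>)) {\<omega> \<in> space M. D i \<omega> = 1};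
         mu_l = (\<integral>\<omega>. (D i \<omega> - p) / (p * (1 - p)) * g (Y1 \<omega>)
                     + (1 - D i \<omega>) / (1 - p) * g (Y0 \<omega>) - b \<partial>M);
         mu_u = (\<integral>\<omega>. (D i \<omega> - p) / (p * (1 - p)) * g (Y1 \<omega>)
                     + (1 - D i \<omega>) / (1 - p) * g (Y0 \<omega>) - a \<partial>M)
     in mu_l \<le> mu_g \<and> mu_g \<le> mu_u"
    unfolding Let_def using hb ha h(2,3) by linarith
qed

end
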